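(* Let $\delta$ satisfy the Kalmanson conditions with respect to $\pi=(x_1,\dots,x_n)$, and let $i<x<y<z<j<t$ be indices in $\{1,\dots,n\}$. Writing $\delta_{ab}(c)=\delta(x_a,x_c)+\delta(x_b,x_c)-\delta(x_a,x_b)$, we have \[\delta_{xy}(z)+\delta_{xz}(y)+\delta_{yz}(x)+\delta_{xy}(t)+\delta_{xz}(t)+\delta_{yz}(t)\ \ge\ 3\delta_{ij}(t)+\delta_{ij}(x)+\delta_{ij}(y)+\delta_{ij}(z).\]
   Context: $X=\{1,\dots,n\}$. A dissimilarity map is $\delta:X\times X\to\mathbb{R}$ with $\delta(i,j)=\delta(j,i)\ge0$, $\delta(i,i)=0$. A circular ordering is a listing $\pi=(x_1,\dots,x_n)$ of $X$ regarded cyclically. $\delta$ satisfies the Kalmanson conditions with respect to $\pi$ if for all $1\le i<j<k<l\le n$: $\delta(x_i,x_j)+\delta(x_k,x_l)\le\delta(x_i,x_k)+\delta(x_j,x_l)$ and $\delta(x_i,x_l)+\delta(x_j,x_k)\le\delta(x_i,x_k)+\delta(x_j,x_l)$. *)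

theory Defs
  imports Complex_Main
begin

definition dissimilarity :: "nat \<Rightarrow> (nat \<Rightarrow> nat \<Rightarrow> real) \<Rightarrow> bool" where
  "dissimilarity n \<delta> \<longleftrightarrow>
     (\<forall>a\<in>{1..n}. \<forall>b\<in>{1..n}. \<delta> a b = \<delta> b a \<and> \<delta> a b \<ge> 0) \<and>
     (\<forall>a\<in>{1..n}. \<delta> a a = 0)"

text \<open>A circular ordering (x_1,...,x_n) of X is given by the listing map pi with pi k = x_k,
  a bijection of {1..n} onto X.\<close>
definition circular_ordering :: "nat \<Rightarrow> (nat \<Rightarrow> nat) \<Rightarrow> bool" where
  "circular_ordering n \<pi> \<longleftrightarrow> bij_betw \<pi> {1..n} {1..n}"

definition kalmanson :: "nat \<Rightarrow> (nat \<Rightarrow> nat \<Rightarrow> real) \<Rightarrow> (nat \<Rightarrow> nat) \<Rightarrow> bool" where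
  "kalmanson n \<delta> \<pi> \<longleftrightarrow>
     (\<forall>i j k l. 1 \<le> i \<and> i < j \<and> j < k \<and> k < l \<and> l \<le> n \<longrightarrow>
        \<delta> (\<pi> i) (\<pi> j) + \<delta> (\<pi> k) (\<pi> l) \<le> \<delta> (\<pi> i) (\<pi> k) + \<delta> (\<pi> j) (\<pi> l) \<and>
        \<delta> (\<pi> i) (\<pi> l) + \<delta> (\<pi> j) (\<pi> k) \<le> \<delta> (\<pi> i) (\<pi> k) + \<delta> (\<pi> j) (\<pi> l))"

definition dlt :: "(nat \<Rightarrow> nat \<Rightarrow> real) \<Rightarrow> (nat \<Rightarrow> nat) \<Rightarrow> nat \<Rightarrow> nat \<Rightarrow> nat \<Rightarrow> real" where
  "dlt \<delta> \<pi> a b c = \<delta> (\<pi> a) (\<pi> c) + \<delta> (\<pi> b) (\<pi> c) - \<delta> (\<pi> a) (\<pi> b)"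

end

theory Submission
  imports Defs
begin

theorem mainTheorem9:
  fixes n :: nat and \<delta> :: "nat \<Rightarrow> nat \<Rightarrow> real" and \<pi> :: "nat \<Rightarrow> nat"
    and i x y z j t :: nat
  assumes "dissimilarity n \<delta>"
    and "circular_ordering n \<pi>"
    and "kalmanson n \<delta> \<pi>"
    and "1 \<le> i" and "i < x" and "x < y" and "y < z" and "z < j" and "j < t" and "t \<le> n"
  shows "dlt \<delta> \<pi> x y z + dlt \<delta> \<pi> x z y + dlt \<delta> \<pi> y z x
           + dlt \<delta> \<pi> x y t + dlt \<delta> \<pi> x z t + dlt \<delta> \<pi> y z t
         \<ge> 3 * dlt \<delta> \<pi> i j t + dlt \<delta> \<pi> i j x + dlt \<delta> \<pi> i j y + dlt \<delta> \<pi> i j z"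
proof -
  have K: "\<And>w. i < w \<Longrightarrow> w < j \<Longrightarrow>
     \<delta> (\<pi> i) (\<pi> w) + \<delta> (\<pi> j) (\<pi> t) \<le> \<delta> (\<pi> i) (\<pi> j) + \<delta> (\<pi> w) (\<pi> t) \<and>
     \<delta> (\<pi> i) (\<pi> t) + \<delta> (\<pi> w) (\<pi> j) \<le> \<delta> (\<pi> i) (\<pi> j) + \<delta> (\<pi> w) (\<pi> t)"
    using assms(3,4,9,10) unfolding kalmanson_def by (meson less_trans)
  have S: "\<And>a b. a \<in> {1..n} \<Longrightarrow> b \<in> {1..n} \<Longrightarrow> \<delta> a b = \<delta> b a"
    using assms(1) unfolding dissimilarity_def by blast
  have B: "\<And>k. 1 \<le> k \<Longrightarrow> k \<le> n \<Longrightarrow> \<pi> k \<in> {1..n}"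
    using assms(2) unfolding circular_ordering_def bij_betw_def by auto
  have inr: "1 \<le> x" "x \<le> n" "1 \<le> y" "y \<le> n" "1 \<le> z" "z \<le> n" "j \<le> n" "1 \<le> j" "1 \<le> t"
    using assms(4-10) by linarith+
  have s1: "\<delta> (\<pi> y) (\<pi> x) = \<delta> (\<pi> x) (\<pi> y)" "\<delta> (\<pi> z) (\<pi> x) = \<delta> (\<pi> x) (\<pi> z)"
    "\<delta> (\<pi> z) (\<pi> y) = \<delta> (\<pi> y) (\<pi> z)"
    "\<delta> (\<pi> x) (\<pi> j) = \<delta> (\<pi> j) (\<pi> x)" "\<delta> (\<pi> y) (\<pi> j) = \<delta> (\<pi> j) (\<pi> y)"
    "\<delta> (\<pi> z) (\<pi> j) = \<delta> (\<pi> j) (\<pi> z)"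
    using S B inr by auto
  have kx: "i < x" "x < j" and ky: "i < y" "y < j" and kz: "i < z" "z < j" using assms by linarith+
  show ?thesis using K[OF kx] K[OF ky] K[OF kz] s1 unfolding dlt_def by (smt (verit))
qed

end
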